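(* Each of the following theories (in a language with two binary relation symbols $R$ and $S$, where $S$ is required to be coarser than $R$, i.e. $R\subseteq S$) has superSAP with respect to both relations (simultaneously): (1) $R$ and $S$ are both partial orders; (2) $R$ is a partial order and $S$ is a preorder (reflexive transitive); (3) $R$ is a partial order and $S$ is a tolerance (reflexive symmetric); (4) $R$ is a strict partial order (antireflexive transitive) and $S$ is a graph relation (symmetric antireflexive); (5) $R$ is a directed graph relation (antireflexive) and $S$ is a strict order relation (antireflexive transitive). Moreover, SAP is maintained if families of unary operations which preserve both relations ($x\,R\,y\Rightarrow h(x)\,R\,h(y)$ and $x\,S\,y\Rightarrow h(x)\,S\,h(y)$) or reverse both relations ($x\,R\,y\Rightarrow h(y)\,R\,h(x)$ and $x\,S\,y\Rightarrow h(y)\,S\,h(x)$) are added.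
   Context: A triple to be amalgamated is $\mathbf{A},\mathbf{B},\mathbf{C}$ models with $\mathbf{C}\subseteq\mathbf{A}$, $\mathbf{C}\subseteq\mathbf{B}$, $C=A\cap B$. SAP: there is a model $\mathbf{D}$ with $\mathbf{A},\mathbf{B}\subseteq\mathbf{D}$. SuperSAP with respect to a relation $T$: a $\mathbf{D}$ witnessing SAP such that for $a\in A\setminus B$, $b\in B\setminus A$, $a\,T_{\mathbf{D}}\,b$ implies $a\,T_{\mathbf{A}}\,c\,T_{\mathbf{B}}\,b$ for some $c\in C$, and $b\,T_{\mathbf{D}}\,a$ implies $b\,T_{\mathbf{B}}\,c\,T_{\mathbf{A}}\,a$ for some $c\in C$. *)

theory Defs
  imports Main
begin

text \<open>A structure for the language with two binary relation symbols R and S: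
  a carrier set together with interpretations of R and S (only their values on
  the carrier matter).\<close>
record 'a rstr =
  carrier :: "'a set"
  rel_R :: "'a \<Rightarrow> 'a \<Rightarrow> bool"
  rel_S :: "'a \<Rightarrow> 'a \<Rightarrow> bool"

record ('a, 'i) ostr = "'a rstr" +
  ops :: "'i \<Rightarrow> 'a \<Rightarrow> 'a"

datatype thy = T1 | T2 | T3 | T4 | T5

definition partial_order_on :: "'a set \<Rightarrow> ('a \<Rightarrow> 'a \<Rightarrow> bool) \<Rightarrow> bool" where
  "partial_order_on A r \<longleftrightarrow> reflp_on A r \<and> antisymp_on A r \<and> transp_on A r"

definition preorder_on :: "'a set \<Rightarrow> ('a \<Rightarrow> 'a \<Rightarrow> bool) \<Rightarrow> bool" where
  "preorder_on A r \<longleftrightarrow> reflp_on A r \<and> transp_on A r"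

definition tolerance_on :: "'a set \<Rightarrow> ('a \<Rightarrow> 'a \<Rightarrow> bool) \<Rightarrow> bool" where
  "tolerance_on A r \<longleftrightarrow> reflp_on A r \<and> symp_on A r"

definition strict_partial_order_on :: "'a set \<Rightarrow> ('a \<Rightarrow> 'a \<Rightarrow> bool) \<Rightarrow> bool" where
  "strict_partial_order_on A r \<longleftrightarrow> irreflp_on A r \<and> transp_on A r"

definition graph_rel_on :: "'a set \<Rightarrow> ('a \<Rightarrow> 'a \<Rightarrow> bool) \<Rightarrow> bool" where
  "graph_rel_on A r \<longleftrightarrow> symp_on A r \<and> irreflp_on A r"

definition digraph_rel_on :: "'a set \<Rightarrow> ('a \<Rightarrow> 'a \<Rightarrow> bool) \<Rightarrow> bool" where
  "digraph_rel_on A r \<longleftrightarrow> irreflp_on A r"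

definition rmodel :: "thy \<Rightarrow> ('a, 'b) rstr_scheme \<Rightarrow> bool" where
  "rmodel t M \<longleftrightarrow>
     (\<forall>x\<in>carrier M. \<forall>y\<in>carrier M. rel_R M x y \<longrightarrow> rel_S M x y) \<and>
     (case t of
        T1 \<Rightarrow> partial_order_on (carrier M) (rel_R M) \<and> partial_order_on (carrier M) (rel_S M)
      | T2 \<Rightarrow> partial_order_on (carrier M) (rel_R M) \<and> preorder_on (carrier M) (rel_S M)
      | T3 \<Rightarrow> partial_order_on (carrier M) (rel_R M) \<and> tolerance_on (carrier M) (rel_S M)
      | T4 \<Rightarrow> strict_partial_order_on (carrier M) (rel_R M) \<and> graph_rel_on (carrier M) (rel_S M)
      | T5 \<Rightarrow> digraph_rel_on (carrier M) (rel_R M) \<and> strict_partial_order_on (carrier M) (rel_S M))"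

definition rsubstr :: "('a, 'b) rstr_scheme \<Rightarrow> ('a, 'c) rstr_scheme \<Rightarrow> bool" where
  "rsubstr C A \<longleftrightarrow> carrier C \<subseteq> carrier A \<and>
     (\<forall>x\<in>carrier C. \<forall>y\<in>carrier C.
        (rel_R C x y \<longleftrightarrow> rel_R A x y) \<and> (rel_S C x y \<longleftrightarrow> rel_S A x y))"

text \<open>Models of the expanded theory: pol i = True means the operation ops i
  preserves both relations, pol i = False means it reverses both relations.\<close>
definition omodel :: "thy \<Rightarrow> ('i \<Rightarrow> bool) \<Rightarrow> ('a, 'i) ostr \<Rightarrow> bool" where
  "omodel t pol M \<longleftrightarrow> rmodel t M \<and>
     (\<forall>i. \<forall>x\<in>carrier M. ops M i x \<in> carrier M) \<and>
     (\<forall>i. \<forall>x\<in>carrier M. \<forall>y\<in>carrier M.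
        (if pol i then
           (rel_R M x y \<longrightarrow> rel_R M (ops M i x) (ops M i y)) \<and>
           (rel_S M x y \<longrightarrow> rel_S M (ops M i x) (ops M i y))
         else
           (rel_R M x y \<longrightarrow> rel_R M (ops M i y) (ops M i x)) \<and>
           (rel_S M x y \<longrightarrow> rel_S M (ops M i y) (ops M i x))))"

definition osubstr :: "('a, 'i) ostr \<Rightarrow> ('a, 'i) ostr \<Rightarrow> bool" where
  "osubstr C A \<longleftrightarrow> rsubstr C A \<and>
     (\<forall>i. \<forall>x\<in>carrier C. ops C i x = ops A i x)"

definition super_cond ::
  "(('a, 'b) rstr_scheme \<Rightarrow> 'a \<Rightarrow> 'a \<Rightarrow> bool) \<Rightarrow>
   ('a, 'b) rstr_scheme \<Rightarrow> ('a, 'b) rstr_scheme \<Rightarrow> ('a, 'b) rstr_scheme \<Rightarrow>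
   ('a, 'b) rstr_scheme \<Rightarrow> bool" where
  "super_cond T A B C D \<longleftrightarrow>
     (\<forall>a\<in>carrier A - carrier B. \<forall>b\<in>carrier B - carrier A.
        (T D a b \<longrightarrow> (\<exists>c\<in>carrier C. T A a c \<and> T B c b)) \<and>
        (T D b a \<longrightarrow> (\<exists>c\<in>carrier C. T B b c \<and> T A c a)))"

end

theory Submission
  imports Defs
begin
definition amalg :: "'a set \<Rightarrow> 'a set \<Rightarrow> ('a\<Rightarrow>'a\<Rightarrow>bool) \<Rightarrow> ('a\<Rightarrow>'a\<Rightarrow>bool) \<Rightarrow> 'a\<Rightarrow>'a\<Rightarrow>bool" where
"amalg a b rA rB x y \<longleftrightarrow>
 (x\<in>a \<and> y\<in>a \<and> rA x y) \<or> (x\<in>b \<and> y\<in>b \<and> rB x y) \<or>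
 (x\<in>a \<and> x\<notin>b \<and> y\<in>b \<and> y\<notin>a \<and> (\<exists>c\<in>a\<inter>b. rA x c \<and> rB c y)) \<or>
 (x\<in>b \<and> x\<notin>a \<and> y\<in>a \<and> y\<notin>b \<and> (\<exists>c\<in>a\<inter>b. rB x c \<and> rA c y))"

definition agree where "agree a b rA rB \<longleftrightarrow> (\<forall>x\<in>a\<inter>b. \<forall>y\<in>a\<inter>b. rA x y = rB x y)"

lemma amalg_AA: "agree a b rA rB \<Longrightarrow> x\<in>a \<Longrightarrow> y\<in>a \<Longrightarrow> amalg a b rA rB x y = rA x y"
  unfolding amalg_def agree_def by auto
lemma amalg_BB: "agree a b rA rB \<Longrightarrow> x\<in>b \<Longrightarrow> y\<in>b \<Longrightarrow> amalg a b rA rB x y = rB x y"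
  unfolding amalg_def agree_def by auto
lemma amalg_AB: "x\<in>a \<Longrightarrow> x\<notin>b \<Longrightarrow> y\<in>b \<Longrightarrow> y\<notin>a \<Longrightarrow> amalg a b rA rB x y = (\<exists>c\<in>a\<inter>b. rA x c \<and> rB c y)"
  unfolding amalg_def by auto
lemma amalg_BA: "x\<in>b \<Longrightarrow> x\<notin>a \<Longrightarrow> y\<in>a \<Longrightarrow> y\<notin>b \<Longrightarrow> amalg a b rA rB x y = (\<exists>c\<in>a\<inter>b. rB x c \<and> rA c y)"
  unfolding amalg_def by auto

lemma amalg_trans:
  assumes ag: "agree a b rA rB"
  and ta: "transp_on a rA" and tb: "transp_on b rB"
  shows "transp_on (a\<union>b) (amalg a b rA rB)"
proof (rule transp_onI)
  fix x y z assume xyz: "x \<in> a\<union>b" "y \<in> a\<union>b" "z \<in> a\<union>b"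
    and h1: "amalg a b rA rB x y" and h2: "amalg a b rA rB y z"
  have TA: "\<And>x y z. x\<in>a \<Longrightarrow> y\<in>a \<Longrightarrow> z\<in>a \<Longrightarrow> rA x y \<Longrightarrow> rA y z \<Longrightarrow> rA x z"
    using ta by (meson transp_onD)
  have TB: "\<And>x y z. x\<in>b \<Longrightarrow> y\<in>b \<Longrightarrow> z\<in>b \<Longrightarrow> rB x y \<Longrightarrow> rB y z \<Longrightarrow> rB x z"
    using tb by (meson transp_onD)
  have AG1: "\<And>x y. x\<in>a \<Longrightarrow> x\<in>b \<Longrightarrow> y\<in>a \<Longrightarrow> y\<in>b \<Longrightarrow> rA x y \<Longrightarrow> rB x y" using ag unfolding agree_def by blast
  have AG2: "\<And>x y. x\<in>a \<Longrightarrow> x\<in>b \<Longrightarrow> y\<in>a \<Longrightarrow> y\<in>b \<Longrightarrow> rB x y \<Longrightarrow> rA x y" using ag unfolding agree_def by blast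
  note S = amalg_AA[OF ag] amalg_BB[OF ag] amalg_AB amalg_BA
  show "amalg a b rA rB x z"
    using xyz h1 h2 
    apply (cases "x\<in>a"; cases "x\<in>b"; cases "y\<in>a"; cases "y\<in>b"; cases "z\<in>a"; cases "z\<in>b")
    apply (simp_all add: S)
    apply (blast intro: TA TB AG1 AG2)+
    done
qed

definition free :: "'a set \<Rightarrow> 'a set \<Rightarrow> ('a\<Rightarrow>'a\<Rightarrow>bool) \<Rightarrow> ('a\<Rightarrow>'a\<Rightarrow>bool) \<Rightarrow> 'a\<Rightarrow>'a\<Rightarrow>bool" where
"free a b rA rB x y \<longleftrightarrow> (x\<in>a \<and> y\<in>a \<and> rA x y) \<or> (x\<in>b \<and> y\<in>b \<and> rB x y)"

definition cross :: "'a set \<Rightarrow> 'a set \<Rightarrow> 'a \<Rightarrow> 'a \<Rightarrow> bool" where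
"cross a b x y \<longleftrightarrow> (x\<in>a \<and> x\<notin>b \<and> y\<in>b \<and> y\<notin>a) \<or> (x\<in>b \<and> x\<notin>a \<and> y\<in>a \<and> y\<notin>b)"

definition symc where
"symc a b rA rB sA sB x y \<longleftrightarrow> free a b sA sB x y \<or>
   (cross a b x y \<and> (amalg a b rA rB x y \<or> amalg a b rA rB y x))"

lemma free_AA: "agree a b rA rB \<Longrightarrow> x\<in>a \<Longrightarrow> y\<in>a \<Longrightarrow> free a b rA rB x y = rA x y"
  unfolding free_def agree_def by auto
lemma free_BB: "agree a b rA rB \<Longrightarrow> x\<in>b \<Longrightarrow> y\<in>b \<Longrightarrow> free a b rA rB x y = rB x y"
  unfolding free_def agree_def by auto
lemma free_AB: "x\<in>a \<Longrightarrow> x\<notin>b \<Longrightarrow> y\<in>b \<Longrightarrow> y\<notin>a \<Longrightarrow> free a b rA rB x y = False"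
  unfolding free_def by auto
lemma free_BA: "x\<in>b \<Longrightarrow> x\<notin>a \<Longrightarrow> y\<in>a \<Longrightarrow> y\<notin>b \<Longrightarrow> free a b rA rB x y = False"
  unfolding free_def by auto

lemma symc_AA: "agree a b sA sB \<Longrightarrow> x\<in>a \<Longrightarrow> y\<in>a \<Longrightarrow> symc a b rA rB sA sB x y = sA x y"
  unfolding symc_def cross_def using free_AA by fastforce
lemma symc_BB: "agree a b sA sB \<Longrightarrow> x\<in>b \<Longrightarrow> y\<in>b \<Longrightarrow> symc a b rA rB sA sB x y = sB x y"
  unfolding symc_def cross_def using free_BB by fastforce
lemma symc_AB: "x\<in>a \<Longrightarrow> x\<notin>b \<Longrightarrow> y\<in>b \<Longrightarrow> y\<notin>a \<Longrightarrow> symc a b rA rB sA sB x y =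
   ((\<exists>c\<in>a\<inter>b. rA x c \<and> rB c y) \<or> (\<exists>c\<in>a\<inter>b. rB y c \<and> rA c x))"
  unfolding symc_def cross_def free_def amalg_def by auto
lemma symc_BA: "x\<in>b \<Longrightarrow> x\<notin>a \<Longrightarrow> y\<in>a \<Longrightarrow> y\<notin>b \<Longrightarrow> symc a b rA rB sA sB x y =
   ((\<exists>c\<in>a\<inter>b. rB x c \<and> rA c y) \<or> (\<exists>c\<in>a\<inter>b. rA y c \<and> rB c x))"
  unfolding symc_def cross_def free_def amalg_def by auto

lemma amalg_refl: "reflp_on a rA \<Longrightarrow> reflp_on b rB \<Longrightarrow> reflp_on (a\<union>b) (amalg a b rA rB)"
  unfolding reflp_on_def amalg_def by auto
lemma symc_refl: "reflp_on a sA \<Longrightarrow> reflp_on b sB \<Longrightarrow> reflp_on (a\<union>b) (symc a b rA rB sA sB)"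
  unfolding reflp_on_def symc_def free_def by auto
lemma amalg_irrefl: "irreflp_on a rA \<Longrightarrow> irreflp_on b rB \<Longrightarrow> irreflp_on (a\<union>b) (amalg a b rA rB)"
  unfolding irreflp_on_def amalg_def by auto
lemma free_irrefl: "irreflp_on a rA \<Longrightarrow> irreflp_on b rB \<Longrightarrow> irreflp_on (a\<union>b) (free a b rA rB)"
  unfolding irreflp_on_def free_def by auto
lemma symc_irrefl: "irreflp_on a sA \<Longrightarrow> irreflp_on b sB \<Longrightarrow> irreflp_on (a\<union>b) (symc a b rA rB sA sB)"
  unfolding irreflp_on_def symc_def free_def cross_def by auto
lemma symc_sym: "symp_on a sA \<Longrightarrow> symp_on b sB \<Longrightarrow> symp_on (a\<union>b) (symc a b rA rB sA sB)"
  unfolding symp_on_def symc_def free_def cross_def by blast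

lemma amalg_antisym:
  assumes ag: "agree a b rA rB"
  and ta: "transp_on a rA" and tb: "transp_on b rB"
  and aa: "antisymp_on a rA" and ab: "antisymp_on b rB"
  shows "antisymp_on (a\<union>b) (amalg a b rA rB)"
proof (rule antisymp_onI)
  fix x y assume xy: "x \<in> a\<union>b" "y \<in> a\<union>b"
    and h1: "amalg a b rA rB x y" and h2: "amalg a b rA rB y x"
  have TA: "\<And>x y z. x\<in>a \<Longrightarrow> y\<in>a \<Longrightarrow> z\<in>a \<Longrightarrow> rA x y \<Longrightarrow> rA y z \<Longrightarrow> rA x z"
    using ta by (meson transp_onD)
  have TB: "\<And>x y z. x\<in>b \<Longrightarrow> y\<in>b \<Longrightarrow> z\<in>b \<Longrightarrow> rB x y \<Longrightarrow> rB y z \<Longrightarrow> rB x z"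
    using tb by (meson transp_onD)
  have AA: "\<And>x y. x\<in>a \<Longrightarrow> y\<in>a \<Longrightarrow> rA x y \<Longrightarrow> rA y x \<Longrightarrow> x = y"
    using aa by (meson antisymp_onD)
  have AB: "\<And>x y. x\<in>b \<Longrightarrow> y\<in>b \<Longrightarrow> rB x y \<Longrightarrow> rB y x \<Longrightarrow> x = y"
    using ab by (meson antisymp_onD)
  have AG1: "\<And>x y. x\<in>a \<Longrightarrow> x\<in>b \<Longrightarrow> y\<in>a \<Longrightarrow> y\<in>b \<Longrightarrow> rA x y \<Longrightarrow> rB x y" using ag unfolding agree_def by blast
  have AG2: "\<And>x y. x\<in>a \<Longrightarrow> x\<in>b \<Longrightarrow> y\<in>a \<Longrightarrow> y\<in>b \<Longrightarrow> rB x y \<Longrightarrow> rA x y" using ag unfolding agree_def by blast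
  note S = amalg_AA[OF ag] amalg_BB[OF ag] amalg_AB amalg_BA
  have X: False if u: "u\<in>a" "u\<notin>b" "v\<in>b" "v\<notin>a" and
     h: "amalg a b rA rB u v" "amalg a b rA rB v u" for u v
  proof -
    obtain c where c: "c\<in>a" "c\<in>b" "rA u c" "rB c v" using h(1) amalg_AB[OF u] by blast
    obtain d where d: "d\<in>a" "d\<in>b" "rB v d" "rA d u" using h(2) amalg_BA[of v b a u] u by blast
    have "rB c d" using TB[of c v d] c d u by blast
    then have "rA c d" using AG2 c d by blast
    moreover have "rA d c" using TA[of d u c] c d u by blast
    ultimately have "c = d" using AA c d by blast
    then have "u = d" using AA[of u d] c d u by blast
    then show False using u d by blast
  qed
  show "x = y"
  proof (cases "x\<in>a \<and> y\<in>a")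
    case True then show ?thesis using AA h1 h2 S(1) by metis
  next
    case F1: False
    show ?thesis
    proof (cases "x\<in>b \<and> y\<in>b")
      case True then show ?thesis using AB h1 h2 S(2) by metis
    next
      case False
      then show ?thesis using F1 xy X h1 h2 by blast
    qed
  qed
qed

lemma amalg_mono: "agree a b rA rB \<Longrightarrow> agree a b sA sB \<Longrightarrow>
  \<forall>x\<in>a. \<forall>y\<in>a. rA x y \<longrightarrow> sA x y \<Longrightarrow> \<forall>x\<in>b. \<forall>y\<in>b. rB x y \<longrightarrow> sB x y \<Longrightarrow>
  amalg a b rA rB x y \<Longrightarrow> amalg a b sA sB x y"
  unfolding amalg_def by blast
lemma free_mono: "
  \<forall>x\<in>a. \<forall>y\<in>a. rA x y \<longrightarrow> sA x y \<Longrightarrow> \<forall>x\<in>b. \<forall>y\<in>b. rB x y \<longrightarrow> sB x y \<Longrightarrow>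
  free a b rA rB x y \<Longrightarrow> amalg a b sA sB x y"
  unfolding amalg_def free_def by blast
lemma symc_mono: "
  \<forall>x\<in>a. \<forall>y\<in>a. rA x y \<longrightarrow> sA x y \<Longrightarrow> \<forall>x\<in>b. \<forall>y\<in>b. rB x y \<longrightarrow> sB x y \<Longrightarrow>
  amalg a b rA rB x y \<Longrightarrow> symc a b rA rB sA sB x y"
  unfolding amalg_def symc_def free_def cross_def by blast

definition pq :: "bool \<Rightarrow> ('a\<Rightarrow>'a\<Rightarrow>bool) \<Rightarrow> 'a\<Rightarrow>'a\<Rightarrow>bool" where
  "pq p Q u v = (if p then Q u v else Q v u)"

lemma pq_trans: assumes t: "transp_on X Q" shows "transp_on X (pq p Q)"
proof (rule transp_onI)
  fix x y z assume xyz: "x\<in>X" "y\<in>X" "z\<in>X" and h: "pq p Q x y" "pq p Q y z"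
  show "pq p Q x z"
  proof (cases p)
    case True then show ?thesis using h xyz transp_onD[OF t] unfolding pq_def by metis
  next
    case False then show ?thesis using h xyz transp_onD[OF t] unfolding pq_def by metis
  qed
qed
lemma pq_sym: assumes t: "symp_on X Q" shows "symp_on X (pq p Q)"
proof (rule symp_onI)
  fix x y assume xy: "x\<in>X" "y\<in>X" and h: "pq p Q x y"
  show "pq p Q y x"
  proof (cases p)
    case True then show ?thesis using h xy symp_onD[OF t] unfolding pq_def by metis
  next
    case False then show ?thesis using h xy symp_onD[OF t] unfolding pq_def by metis
  qed
qed

lemma amalg_hom:
  assumes tQ: "transp_on (a\<union>b) Q" and hU: "\<forall>x\<in>a\<union>b. h x \<in> a\<union>b"
   and pa: "\<forall>x\<in>a. \<forall>y\<in>a. rA x y \<longrightarrow> Q (h x) (h y)" and pb: "\<forall>x\<in>b. \<forall>y\<in>b. rB x y \<longrightarrow> Q (h x) (h y)"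
   and xy: "x\<in>a\<union>b" "y\<in>a\<union>b" and am: "amalg a b rA rB x y"
  shows "Q (h x) (h y)"
proof -
  have T: "\<And>u v w. u\<in>a\<union>b \<Longrightarrow> v\<in>a\<union>b \<Longrightarrow> w\<in>a\<union>b \<Longrightarrow> Q u v \<Longrightarrow> Q v w \<Longrightarrow> Q u w"
    using tQ by (meson transp_onD)
  from am consider "x\<in>a" "y\<in>a" "rA x y" | "x\<in>b" "y\<in>b" "rB x y"
    | c where "x\<in>a" "y\<in>b" "c\<in>a" "c\<in>b" "rA x c" "rB c y"
    | c where "x\<in>b" "y\<in>a" "c\<in>a" "c\<in>b" "rB x c" "rA c y"
    unfolding amalg_def by blast
  then show ?thesis
  proof cases
    case 1 then show ?thesis using pa by blast
  next
    case 2 then show ?thesis using pb by blast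
  next
    case (3 c)
    have "Q (h x) (h c)" using pa 3 by blast
    moreover have "Q (h c) (h y)" using pb 3 by blast
    moreover have "h x \<in> a\<union>b" "h c \<in> a\<union>b" "h y \<in> a\<union>b" using hU xy 3 by blast+
    ultimately show ?thesis using T by blast
  next
    case (4 c)
    have "Q (h x) (h c)" using pb 4 by blast
    moreover have "Q (h c) (h y)" using pa 4 by blast
    moreover have "h x \<in> a\<union>b" "h c \<in> a\<union>b" "h y \<in> a\<union>b" using hU xy 4 by blast+
    ultimately show ?thesis using T by blast
  qed
qed

lemma free_hom:
  assumes "\<forall>x\<in>a. \<forall>y\<in>a. rA x y \<longrightarrow> Q (h x) (h y)" "\<forall>x\<in>b. \<forall>y\<in>b. rB x y \<longrightarrow> Q (h x) (h y)"
   "free a b rA rB x y"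
  shows "Q (h x) (h y)"
  using assms unfolding free_def by blast

lemma symc_hom:
  assumes sQ: "symp_on (a\<union>b) Q" and hU: "\<forall>x\<in>a\<union>b. h x \<in> a\<union>b"
   and ar: "\<forall>x\<in>a\<union>b. \<forall>y\<in>a\<union>b. amalg a b rA rB x y \<longrightarrow> Q (h x) (h y)"
   and pa: "\<forall>x\<in>a. \<forall>y\<in>a. sA x y \<longrightarrow> Q (h x) (h y)" and pb: "\<forall>x\<in>b. \<forall>y\<in>b. sB x y \<longrightarrow> Q (h x) (h y)"
   and xy: "x\<in>a\<union>b" "y\<in>a\<union>b" and sc: "symc a b rA rB sA sB x y"
  shows "Q (h x) (h y)"
proof -
  from sc consider "free a b sA sB x y" | "amalg a b rA rB x y" | "amalg a b rA rB y x"
    unfolding symc_def by blast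
  then show ?thesis
  proof cases
    case 1 then show ?thesis using free_hom[of a sA Q h b sB x y] pa pb by blast
  next
    case 2 then show ?thesis using ar xy by blast
  next
    case 3
    then have "Q (h y) (h x)" using ar xy by blast
    moreover have "h x \<in> a\<union>b" "h y \<in> a\<union>b" using hU xy by blast+
    ultimately show ?thesis using sQ by (meson symp_onD)
  qed
qed

definition RD where "RD t a b rA rB = (case t of T5 \<Rightarrow> free a b rA rB | _ \<Rightarrow> amalg a b rA rB)"
definition SD where "SD t a b rA rB sA sB = (case t of T3 \<Rightarrow> symc a b rA rB sA sB
   | T4 \<Rightarrow> symc a b rA rB sA sB | _ \<Rightarrow> amalg a b sA sB)"

definition ax where "ax t a r s = rmodel t \<lparr>carrier = a, rel_R = r, rel_S = s\<rparr>"

lemma rmodel_ax: "rmodel t M = ax t (carrier M) (rel_R M) (rel_S M)"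
  by (cases t) (simp_all add: ax_def rmodel_def)

lemma RD_AA: "agree a b rA rB \<Longrightarrow> x\<in>a \<Longrightarrow> y\<in>a \<Longrightarrow> RD t a b rA rB x y = rA x y"
  by (cases t) (simp_all add: RD_def amalg_AA free_AA)
lemma RD_BB: "agree a b rA rB \<Longrightarrow> x\<in>b \<Longrightarrow> y\<in>b \<Longrightarrow> RD t a b rA rB x y = rB x y"
  by (cases t) (simp_all add: RD_def amalg_BB free_BB)
lemma SD_AA: "agree a b sA sB \<Longrightarrow> x\<in>a \<Longrightarrow> y\<in>a \<Longrightarrow> SD t a b rA rB sA sB x y = sA x y"
  by (cases t) (simp_all add: SD_def amalg_AA symc_AA)
lemma SD_BB: "agree a b sA sB \<Longrightarrow> x\<in>b \<Longrightarrow> y\<in>b \<Longrightarrow> SD t a b rA rB sA sB x y = sB x y"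
  by (cases t) (simp_all add: SD_def amalg_BB symc_BB)

lemma D_model:
  assumes A: "ax t a rA sA" and B: "ax t b rB sB" and gr: "agree a b rA rB" and gs: "agree a b sA sB"
  shows "ax t (a\<union>b) (RD t a b rA rB) (SD t a b rA rB sA sB)"
proof -
  have mA: "\<forall>x\<in>a. \<forall>y\<in>a. rA x y \<longrightarrow> sA x y" and mB: "\<forall>x\<in>b. \<forall>y\<in>b. rB x y \<longrightarrow> sB x y"
    using A B by (simp_all add: ax_def rmodel_def)
  show ?thesis
  proof (cases t)
    case T1 then show ?thesis using A B gr gs mA mB
      by (auto simp: ax_def rmodel_def RD_def SD_def partial_order_on_def
        intro: amalg_refl amalg_trans amalg_antisym amalg_mono)
  next
    case T2 then show ?thesis using A B gr gs mA mB
      by (auto simp: ax_def rmodel_def RD_def SD_def partial_order_on_def preorder_on_def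
        intro: amalg_refl amalg_trans amalg_antisym amalg_mono)
  next
    case T3 then show ?thesis using A B gr gs mA mB
      by (auto simp: ax_def rmodel_def RD_def SD_def partial_order_on_def tolerance_on_def
        intro: amalg_refl amalg_trans amalg_antisym symc_mono symc_refl symc_sym)
  next
    case T4 then show ?thesis using A B gr gs mA mB
      by (auto simp: ax_def rmodel_def RD_def SD_def strict_partial_order_on_def graph_rel_on_def
        intro: amalg_irrefl amalg_trans symc_mono symc_irrefl symc_sym)
  next
    case T5 then show ?thesis using A B gr gs mA mB
      by (auto simp: ax_def rmodel_def RD_def SD_def strict_partial_order_on_def digraph_rel_on_def
        intro: free_irrefl amalg_irrefl amalg_trans free_mono)
  qed
qed

lemma D_super:
  assumes A: "ax t a rA sA" and B: "ax t b rB sB" and gr: "agree a b rA rB" and gs: "agree a b sA sB"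
   and xy: "x\<in>a" "x\<notin>b" "y\<in>b" "y\<notin>a"
  shows "(RD t a b rA rB x y \<longrightarrow> (\<exists>c\<in>a\<inter>b. rA x c \<and> rB c y)) \<and>
         (RD t a b rA rB y x \<longrightarrow> (\<exists>c\<in>a\<inter>b. rB y c \<and> rA c x)) \<and>
         (SD t a b rA rB sA sB x y \<longrightarrow> (\<exists>c\<in>a\<inter>b. sA x c \<and> sB c y)) \<and>
         (SD t a b rA rB sA sB y x \<longrightarrow> (\<exists>c\<in>a\<inter>b. sB y c \<and> sA c x))"
proof -
  have mA: "\<forall>x\<in>a. \<forall>y\<in>a. rA x y \<longrightarrow> sA x y" and mB: "\<forall>x\<in>b. \<forall>y\<in>b. rB x y \<longrightarrow> sB x y"
    using A B by (simp_all add: ax_def rmodel_def)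
  show ?thesis
  proof (cases t)
    case T3
    then have "symp_on a sA" "symp_on b sB" using A B by (simp_all add: ax_def rmodel_def tolerance_on_def)
    then show ?thesis using T3 xy mA mB
      by (simp add: RD_def SD_def amalg_AB amalg_BA symc_AB symc_BA) (meson IntE symp_onD)
  next
    case T4
    then have "symp_on a sA" "symp_on b sB" using A B by (simp_all add: ax_def rmodel_def graph_rel_on_def)
    then show ?thesis using T4 xy mA mB
      by (simp add: RD_def SD_def amalg_AB amalg_BA symc_AB symc_BA) (meson IntE symp_onD)
  qed (use xy in \<open>simp_all add: RD_def SD_def amalg_AB amalg_BA free_AB free_BA\<close>)
qed

lemma D_hom:
  assumes A: "ax t a rA sA" and B: "ax t b rB sB" and gr: "agree a b rA rB" and gs: "agree a b sA sB"
   and hA: "\<forall>x\<in>a. h x \<in> a" and hB: "\<forall>x\<in>b. h x \<in> b"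
   and pA: "\<forall>x\<in>a. \<forall>y\<in>a. (rA x y \<longrightarrow> pq p rA (h x) (h y)) \<and> (sA x y \<longrightarrow> pq p sA (h x) (h y))"
   and pB: "\<forall>x\<in>b. \<forall>y\<in>b. (rB x y \<longrightarrow> pq p rB (h x) (h y)) \<and> (sB x y \<longrightarrow> pq p sB (h x) (h y))"
   and xy: "x\<in>a\<union>b" "y\<in>a\<union>b"
  shows "(RD t a b rA rB x y \<longrightarrow> pq p (RD t a b rA rB) (h x) (h y)) \<and>
         (SD t a b rA rB sA sB x y \<longrightarrow> pq p (SD t a b rA rB sA sB) (h x) (h y))"
proof -
  let ?R = "RD t a b rA rB" and ?S = "SD t a b rA rB sA sB"
  have rA': "\<forall>x\<in>a. \<forall>y\<in>a. rA x y \<longrightarrow> pq p ?R (h x) (h y)"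
    using pA hA RD_AA[OF gr] by (simp add: pq_def)
  have rB': "\<forall>x\<in>b. \<forall>y\<in>b. rB x y \<longrightarrow> pq p ?R (h x) (h y)"
    using pB hB RD_BB[OF gr] by (simp add: pq_def)
  have sA': "\<forall>x\<in>a. \<forall>y\<in>a. sA x y \<longrightarrow> pq p ?S (h x) (h y)"
    using pA hA SD_AA[OF gs] by (simp add: pq_def)
  have sB': "\<forall>x\<in>b. \<forall>y\<in>b. sB x y \<longrightarrow> pq p ?S (h x) (h y)"
    using pB hB SD_BB[OF gs] by (simp add: pq_def)
  have M: "ax t (a\<union>b) ?R ?S" using D_model[OF A B gr gs] .
  have RS: "\<forall>u\<in>a\<union>b. \<forall>v\<in>a\<union>b. ?R u v \<longrightarrow> ?S u v" using M by (simp add: ax_def rmodel_def)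
  have QRS: "\<forall>u\<in>a\<union>b. \<forall>v\<in>a\<union>b. pq p ?R u v \<longrightarrow> pq p ?S u v" using RS by (simp add: pq_def)
  have hU: "\<forall>x\<in>a\<union>b. h x \<in> a\<union>b" using hA hB by blast
  have AH: "pq p ?R (h x) (h y)" if tR: "transp_on (a\<union>b) ?R" and eR: "?R = amalg a b rA rB" and r: "?R x y"
  proof -
    have "amalg a b rA rB x y" using r eR by simp
    then show ?thesis by (rule amalg_hom[of a b "pq p ?R" h rA rB x y, OF pq_trans[OF tR] hU rA' rB' xy])
  qed
  have AHS: "pq p ?S (h x) (h y)" if tS: "transp_on (a\<union>b) ?S" and eS: "?S = amalg a b sA sB" and r: "?S x y"
  proof -
    have "amalg a b sA sB x y" using r eS by simp
    then show ?thesis by (rule amalg_hom[of a b "pq p ?S" h sA sB x y, OF pq_trans[OF tS] hU sA' sB' xy])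
  qed
  have SH: "pq p ?S (h x) (h y)" if tR: "transp_on (a\<union>b) ?R" and eR: "?R = amalg a b rA rB"
     and sS: "symp_on (a\<union>b) ?S" and eS: "?S = symc a b rA rB sA sB" and r: "?S x y"
  proof -
    have AR: "\<forall>x\<in>a\<union>b. \<forall>y\<in>a\<union>b. amalg a b rA rB x y \<longrightarrow> pq p ?S (h x) (h y)"
    proof (intro ballI impI)
      fix u v assume uv: "u\<in>a\<union>b" "v\<in>a\<union>b" and am: "amalg a b rA rB u v"
      have "pq p ?R (h u) (h v)" using am by (rule amalg_hom[of a b "pq p ?R" h rA rB u v, OF pq_trans[OF tR] hU rA' rB' uv])
      moreover have "h u \<in> a\<union>b" "h v \<in> a\<union>b" using hU uv by blast+
      ultimately show "pq p ?S (h u) (h v)" using QRS by blast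
    qed
    have "symc a b rA rB sA sB x y" using r eS by simp
    then show ?thesis by (rule symc_hom[of a b "pq p ?S" h rA rB sA sB x y, OF pq_sym[OF sS] hU AR sA' sB' xy])
  qed
  show ?thesis
  proof (cases t)
    case T1
    then have tR: "transp_on (a\<union>b) ?R" and tS: "transp_on (a\<union>b) ?S"
      using M by (simp_all add: ax_def rmodel_def partial_order_on_def)
    have eR: "?R = amalg a b rA rB" and eS: "?S = amalg a b sA sB" using T1 by (simp_all add: RD_def SD_def)
    show ?thesis using AH[OF tR eR] AHS[OF tS eS] by blast
  next
    case T2
    then have tR: "transp_on (a\<union>b) ?R" and tS: "transp_on (a\<union>b) ?S"
      using M by (simp_all add: ax_def rmodel_def partial_order_on_def preorder_on_def)
    have eR: "?R = amalg a b rA rB" and eS: "?S = amalg a b sA sB" using T2 by (simp_all add: RD_def SD_def)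
    show ?thesis using AH[OF tR eR] AHS[OF tS eS] by blast
  next
    case T3
    then have tR: "transp_on (a\<union>b) ?R" and sS: "symp_on (a\<union>b) ?S"
      using M by (simp_all add: ax_def rmodel_def partial_order_on_def tolerance_on_def)
    have eR: "?R = amalg a b rA rB" and eS: "?S = symc a b rA rB sA sB" using T3 by (simp_all add: RD_def SD_def)
    show ?thesis using AH[OF tR eR] SH[OF tR eR sS eS] by blast
  next
    case T4
    then have tR: "transp_on (a\<union>b) ?R" and sS: "symp_on (a\<union>b) ?S"
      using M by (simp_all add: ax_def rmodel_def strict_partial_order_on_def graph_rel_on_def)
    have eR: "?R = amalg a b rA rB" and eS: "?S = symc a b rA rB sA sB" using T4 by (simp_all add: RD_def SD_def)
    show ?thesis using AH[OF tR eR] SH[OF tR eR sS eS] by blast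
  next
    case T5
    then have tS: "transp_on (a\<union>b) ?S"
      using M by (simp_all add: ax_def rmodel_def strict_partial_order_on_def)
    have eR: "?R = free a b rA rB" and eS: "?S = amalg a b sA sB" using T5 by (simp_all add: RD_def SD_def)
    have "pq p ?R (h x) (h y)" if r: "?R x y"
    proof -
      have "free a b rA rB x y" using r eR by simp
      then show ?thesis by (rule free_hom[of a rA "pq p ?R" h b rB, OF rA' rB'])
    qed
    then show ?thesis using AHS[OF tS eS] by blast
  qed
qed

lemma agree_of: "rsubstr C A \<Longrightarrow> rsubstr C B \<Longrightarrow> carrier C = carrier A \<inter> carrier B \<Longrightarrow>
   agree (carrier A) (carrier B) (rel_R A) (rel_R B) \<and> agree (carrier A) (carrier B) (rel_S A) (rel_S B)"
  unfolding agree_def rsubstr_def by auto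

theorem corollary3p2:
  fixes t :: thy and pol :: "'i \<Rightarrow> bool"
  shows
   "(\<forall>A B C :: 'a rstr.
       rmodel t A \<and> rmodel t B \<and> rmodel t C \<and> rsubstr C A \<and> rsubstr C B \<and>
       carrier C = carrier A \<inter> carrier B \<longrightarrow>
       (\<exists>D :: 'a rstr. rmodel t D \<and> rsubstr A D \<and> rsubstr B D \<and>
          super_cond rel_R A B C D \<and> super_cond rel_S A B C D))
    \<and>
    (\<forall>A B C :: ('a, 'i) ostr.
       omodel t pol A \<and> omodel t pol B \<and> omodel t pol C \<and> osubstr C A \<and> osubstr C B \<and>
       carrier C = carrier A \<inter> carrier B \<longrightarrow>
       (\<exists>D :: ('a, 'i) ostr. omodel t pol D \<and> osubstr A D \<and> osubstr B D))"
proof (intro conjI allI impI)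
  fix A B C :: "'a rstr"
  assume H: "rmodel t A \<and> rmodel t B \<and> rmodel t C \<and> rsubstr C A \<and> rsubstr C B \<and>
       carrier C = carrier A \<inter> carrier B"
  let ?a = "carrier A" and ?b = "carrier B"
  have mA: "ax t ?a (rel_R A) (rel_S A)" and mB: "ax t ?b (rel_R B) (rel_S B)"
    using H rmodel_ax by blast+
  have gr: "agree ?a ?b (rel_R A) (rel_R B)" and gs: "agree ?a ?b (rel_S A) (rel_S B)"
    using agree_of H by blast+
  define D :: "'a rstr" where "D = \<lparr>carrier = ?a \<union> ?b, rel_R = RD t ?a ?b (rel_R A) (rel_R B),
     rel_S = SD t ?a ?b (rel_R A) (rel_R B) (rel_S A) (rel_S B)\<rparr>"
  have "rmodel t D" unfolding rmodel_ax D_def using D_model[OF mA mB gr gs] by simp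
  moreover have "rsubstr A D" unfolding rsubstr_def D_def using RD_AA[OF gr] SD_AA[OF gs] by auto
  moreover have "rsubstr B D" unfolding rsubstr_def D_def using RD_BB[OF gr] SD_BB[OF gs] by auto
  moreover have "super_cond rel_R A B C D \<and> super_cond rel_S A B C D"
    unfolding super_cond_def D_def using D_super[OF mA mB gr gs] H by simp
  ultimately show "\<exists>D :: 'a rstr. rmodel t D \<and> rsubstr A D \<and> rsubstr B D \<and>
          super_cond rel_R A B C D \<and> super_cond rel_S A B C D" by blast
next
  fix A B C :: "('a, 'i) ostr"
  assume H: "omodel t pol A \<and> omodel t pol B \<and> omodel t pol C \<and> osubstr C A \<and> osubstr C B \<and>
       carrier C = carrier A \<inter> carrier B"
  let ?a = "carrier A" and ?b = "carrier B"
  have oA: "omodel t pol A" and oB: "omodel t pol B" using H by blast+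
  have mA: "ax t ?a (rel_R A) (rel_S A)" and mB: "ax t ?b (rel_R B) (rel_S B)"
    using oA oB rmodel_ax[of t A] rmodel_ax[of t B] unfolding omodel_def by simp_all
  have sCA: "rsubstr C A" and sCB: "rsubstr C B" using H unfolding osubstr_def by blast+
  have gr: "agree ?a ?b (rel_R A) (rel_R B)" and gs: "agree ?a ?b (rel_S A) (rel_S B)"
    using agree_of[OF sCA sCB] H by blast+
  have opsAB: "\<And>i x. x \<in> ?a \<Longrightarrow> x \<in> ?b \<Longrightarrow> ops A i x = ops B i x"
    using H unfolding osubstr_def by (metis IntI)
  define hh where "hh = (\<lambda>i x. if x \<in> ?a then ops A i x else ops B i x)"
  define D :: "('a, 'i) ostr" where "D = \<lparr>carrier = ?a \<union> ?b, rel_R = RD t ?a ?b (rel_R A) (rel_R B),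
     rel_S = SD t ?a ?b (rel_R A) (rel_R B) (rel_S A) (rel_S B), ops = hh\<rparr>"
  have hA: "\<forall>x\<in>?a. hh i x \<in> ?a" for i using oA unfolding omodel_def hh_def by simp
  have hB: "\<forall>x\<in>?b. hh i x \<in> ?b" for i using oB opsAB unfolding omodel_def hh_def by auto
  have pA: "\<forall>x\<in>?a. \<forall>y\<in>?a. (rel_R A x y \<longrightarrow> pq (pol i) (rel_R A) (hh i x) (hh i y)) \<and>
     (rel_S A x y \<longrightarrow> pq (pol i) (rel_S A) (hh i x) (hh i y))" for i
    using oA unfolding omodel_def hh_def pq_def by (cases "pol i") auto
  have pB: "\<forall>x\<in>?b. \<forall>y\<in>?b. (rel_R B x y \<longrightarrow> pq (pol i) (rel_R B) (hh i x) (hh i y)) \<and>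
     (rel_S B x y \<longrightarrow> pq (pol i) (rel_S B) (hh i x) (hh i y))" for i
  proof -
    have e: "\<forall>x\<in>?b. hh i x = ops B i x" using opsAB unfolding hh_def by auto
    show ?thesis using oB e unfolding omodel_def pq_def by (cases "pol i") auto
  qed
  have "omodel t pol D"
    unfolding omodel_def
  proof (intro conjI allI ballI)
    show "rmodel t D" unfolding rmodel_ax D_def using D_model[OF mA mB gr gs] by simp
  next
    fix i x assume "x \<in> carrier D"
    then show "ops D i x \<in> carrier D" using hA[of i] hB[of i] unfolding D_def by auto
  next
    fix i x y assume xy: "x \<in> carrier D" "y \<in> carrier D"
    have "x \<in> ?a \<union> ?b" "y \<in> ?a \<union> ?b" using xy unfolding D_def by simp_all
    from D_hom[OF mA mB gr gs hA hB pA pB this]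
    show "if pol i
           then (rel_R D x y \<longrightarrow> rel_R D (ops D i x) (ops D i y)) \<and>
                (rel_S D x y \<longrightarrow> rel_S D (ops D i x) (ops D i y))
           else (rel_R D x y \<longrightarrow> rel_R D (ops D i y) (ops D i x)) \<and>
                (rel_S D x y \<longrightarrow> rel_S D (ops D i y) (ops D i x))"
      unfolding D_def pq_def by (cases "pol i") simp_all
  qed
  moreover have "osubstr A D"
  proof -
    have "rsubstr A D" unfolding rsubstr_def D_def using RD_AA[OF gr] SD_AA[OF gs] by simp
    moreover have "\<forall>i. \<forall>x\<in>carrier A. ops A i x = ops D i x" unfolding D_def hh_def by simp
    ultimately show ?thesis unfolding osubstr_def by blast
  qed
  moreover have "osubstr B D"
  proof -
    have "rsubstr B D" unfolding rsubstr_def D_def using RD_BB[OF gr] SD_BB[OF gs] by simp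
    moreover have "\<forall>i. \<forall>x\<in>carrier B. ops B i x = ops D i x" unfolding D_def hh_def using opsAB by simp
    ultimately show ?thesis unfolding osubstr_def by blast
  qed
  ultimately show "\<exists>D :: ('a, 'i) ostr. omodel t pol D \<and> osubstr A D \<and> osubstr B D" by blast
qed

end
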